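(* For $n\geqslant 3$, the set $\mathcal{F}_2=\{f_i^{2,k}: i\in\{2,3,\ldots,n\},\ k\in\{3,4,\ldots,n\}\}$ forms a basis of the eigenspace of the Star graph $S_n$ with eigenvalue $n-2$.
   Context: Write a permutation $\pi$ of $\{1,\ldots,n\}$ as $[\pi_1\ldots\pi_n]$ with $\pi_j=\pi(j)$. The Star graph $S_n$ has vertex set $\mathrm{Sym}_n$, and two permutations are adjacent iff one is obtained from the other by exchanging the entries in positions $1$ and $i$ for some $2\le i\le n$ (the Cayley graph of $\mathrm{Sym}_n$ with generators $(1\ i)$, $2\le i\le n$). The eigenspace with eigenvalue $\theta$ is the space of functions $f:\mathrm{Sym}_n\to\mathbb{R}$ with $\theta f(x)=\sum_{y\in N(x)}f(y)$ for all $x$. For $i\in\{1,\ldots,n\}$ and distinct $j,k\in\{2,\ldots,n\}$, $f_i^{j,k}(\pi)=1$ if $\pi_j=i$, $f_i^{j,k}(\pi)=-1$ if $\pi_k=i$, and $f_i^{j,k}(\pi)=0$ otherwise. *)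

theory Defs
  imports "HOL-Combinatorics.Combinatorics" Complex_Main
begin

definition Sym :: "nat \<Rightarrow> (nat \<Rightarrow> nat) set" where
  "Sym n = {p. p permutes {1..n}}"

text \<open>Neighbours of pi in the Star graph: exchange entries in positions 1 and i.\<close>
definition star_nbrs :: "nat \<Rightarrow> (nat \<Rightarrow> nat) \<Rightarrow> (nat \<Rightarrow> nat) set" where
  "star_nbrs n p = {p \<circ> transpose 1 i | i. i \<in> {2..n}}"

definition star_eigenspace :: "nat \<Rightarrow> real \<Rightarrow> ((nat \<Rightarrow> nat) \<Rightarrow> real) set" where
  "star_eigenspace n \<theta> =
     {f. \<forall>x\<in>Sym n. \<theta> * f x = (\<Sum>y\<in>star_nbrs n x. f y)}"

definition fstar :: "nat \<Rightarrow> nat \<Rightarrow> nat \<Rightarrow> (nat \<Rightarrow> nat) \<Rightarrow> real" where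
  "fstar i j k p = (if p j = i then 1 else if p k = i then -1 else 0)"

end

theory Submission
  imports Defs
begin

lemma Sym_sum_right:
  assumes "\<tau> permutes {1..n}"
  shows "(\<Sum>\<pi>\<in>Sym n. h (\<pi> \<circ> \<tau>)) = (\<Sum>\<pi>\<in>Sym n. (h \<pi> :: real))"
  unfolding Sym_def using sum_permutations_compose_right[OF assms, of h] by simp

lemma Sym_sum_left:
  assumes "\<sigma> permutes {1..n}"
  shows "(\<Sum>\<pi>\<in>Sym n. h (\<sigma> \<circ> \<pi>)) = (\<Sum>\<pi>\<in>Sym n. (h \<pi> :: real))"
  unfolding Sym_def using setum_permutations_compose_left[OF assms, of h] by simp

lemma nbr_sum:
  assumes "x \<in> Sym n"
  shows "(\<Sum>y\<in>star_nbrs n x. f y) = (\<Sum>j\<in>{2..n}. (f (x \<circ> transpose 1 j) :: real))"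
proof -
  have e: "star_nbrs n x = (\<lambda>j. x \<circ> transpose 1 j) ` {2..n}"
    by (auto simp: star_nbrs_def)
  have inj: "inj x" using assms by (auto simp: Sym_def intro: permutes_inj)
  have "inj_on (\<lambda>j. x \<circ> transpose 1 j) {2..n}"
  proof (rule inj_onI)
    fix i j assume "i \<in> {2..n}" "j \<in> {2..n}" "x \<circ> transpose 1 i = x \<circ> transpose 1 j"
    then have "x (transpose 1 i 1) = x (transpose 1 j 1)" by (metis comp_apply)
    then have "x i = x j" by simp
    then show "i = j" using inj by (simp add: inj_eq)
  qed
  then show ?thesis unfolding e by (simp add: sum.reindex)
qed

lemma tr_sum:
  assumes "q \<in> {2..n}"
  shows "(\<Sum>j\<in>{2..n}. (h (transpose 1 j q) :: real)) = (real n - 2) * h q + h 1"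
proof -
  have n: "n \<ge> 2" using assms by auto
  have "{2..n} = insert q ({2..n} - {q})" using assms by auto
  then have "(\<Sum>j\<in>{2..n}. h (transpose 1 j q)) = h (transpose 1 q q) + (\<Sum>j\<in>{2..n} - {q}. h (transpose 1 j q))"
    by (metis Diff_iff finite_Diff finite_atLeastAtMost insertI1 sum.insert)
  also have "(\<Sum>j\<in>{2..n} - {q}. h (transpose 1 j q)) = (\<Sum>j\<in>{2..n} - {q}. h q)"
    using assms by (intro sum.cong) auto
  also have "\<dots> = real (n - 2) * h q" using assms by simp
  finally show ?thesis using n by (simp add: of_nat_diff)
qed

lemma lemmaG:
  assumes eig: "\<forall>\<pi>\<in>Sym n. (real n - 2) * g \<pi> = (\<Sum>j\<in>{2..n}. g (\<pi> \<circ> transpose 1 j))"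
  shows "(real n - 2) * (\<Sum>\<pi>\<in>Sym n. w \<pi> * g \<pi>) = (\<Sum>j\<in>{2..n}. \<Sum>\<pi>\<in>Sym n. w (\<pi> \<circ> transpose 1 j) * g \<pi>)"
proof -
  have "(real n - 2) * (\<Sum>\<pi>\<in>Sym n. w \<pi> * g \<pi>) = (\<Sum>\<pi>\<in>Sym n. w \<pi> * ((real n - 2) * g \<pi>))"
    by (simp add: sum_distrib_left algebra_simps)
  also have "\<dots> = (\<Sum>\<pi>\<in>Sym n. \<Sum>j\<in>{2..n}. w \<pi> * g (\<pi> \<circ> transpose 1 j))"
    using eig by (intro sum.cong) (auto simp: sum_distrib_left)
  also have "\<dots> = (\<Sum>j\<in>{2..n}. \<Sum>\<pi>\<in>Sym n. w \<pi> * g (\<pi> \<circ> transpose 1 j))"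
    by (rule sum.swap)
  also have "\<dots> = (\<Sum>j\<in>{2..n}. \<Sum>\<pi>\<in>Sym n. w (\<pi> \<circ> transpose 1 j) * g \<pi>)"
  proof (rule sum.cong[OF refl])
    fix j assume j: "j \<in> {2..n}"
    have p: "transpose 1 j permutes {1..n}" using j by (intro permutes_swap_id) auto
    have "(\<Sum>\<pi>\<in>Sym n. w (\<pi> \<circ> transpose 1 j) * g \<pi>)
       = (\<Sum>\<pi>\<in>Sym n. w ((\<pi> \<circ> transpose 1 j) \<circ> transpose 1 j) * g (\<pi> \<circ> transpose 1 j))"
      by (rule Sym_sum_right[OF p, of "\<lambda>\<pi>. w (\<pi> \<circ> transpose 1 j) * g \<pi>", symmetric])
    also have "\<dots> = (\<Sum>\<pi>\<in>Sym n. w \<pi> * g (\<pi> \<circ> transpose 1 j))"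
      by (simp add: comp_assoc)
    finally show "(\<Sum>\<pi>\<in>Sym n. w \<pi> * g (\<pi> \<circ> transpose 1 j)) = (\<Sum>\<pi>\<in>Sym n. w (\<pi> \<circ> transpose 1 j) * g \<pi>)" by simp
  qed
  finally show ?thesis .
qed

definition ind :: "bool \<Rightarrow> real" where "ind b = (if b then 1 else 0)"

lemma Sym_inj: "p \<in> Sym n \<Longrightarrow> inj p"
  by (auto simp: Sym_def intro: permutes_inj)

lemma fstar_alt:
  assumes "inj p" "k \<noteq> 2"
  shows "fstar i 2 k p = ind (p 2 = i) - ind (p k = i)"
proof -
  have "p 2 \<noteq> p k" using assms by (auto simp: inj_eq)
  then show ?thesis by (auto simp: fstar_def ind_def)
qed

lemma comp_Sym: "x \<in> Sym n \<Longrightarrow> \<tau> permutes {1..n} \<Longrightarrow> x \<circ> \<tau> \<in> Sym n"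
  by (auto simp: Sym_def intro: permutes_compose)

lemma tr_perm: "j \<in> {1..(n::nat)} \<Longrightarrow> transpose 1 j permutes {1..n}"
  by (rule permutes_swap_id) auto

lemma part1:
  assumes k: "k \<in> {3..n}"
  shows "fstar i 2 k \<in> star_eigenspace n (real n - 2)"
  unfolding star_eigenspace_def
proof (intro CollectI ballI)
  fix x assume x: "x \<in> Sym n"
  have "(\<Sum>y\<in>star_nbrs n x. fstar i 2 k y) = (\<Sum>j\<in>{2..n}. fstar i 2 k (x \<circ> transpose 1 j))"
    by (rule nbr_sum[OF x])
  also have "\<dots> = (\<Sum>j\<in>{2..n}. ind (x (transpose 1 j 2) = i) - ind (x (transpose 1 j k) = i))"
  proof (rule sum.cong[OF refl])
    fix j assume j: "j \<in> {2..n}"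
    have "x \<circ> transpose 1 j \<in> Sym n" using j x by (intro comp_Sym tr_perm) auto
    then show "fstar i 2 k (x \<circ> transpose 1 j) = ind (x (transpose 1 j 2) = i) - ind (x (transpose 1 j k) = i)"
      using k by (subst fstar_alt) (auto intro: Sym_inj)
  qed
  also have "\<dots> = (\<Sum>j\<in>{2..n}. ind (x (transpose 1 j 2) = i)) - (\<Sum>j\<in>{2..n}. ind (x (transpose 1 j k) = i))"
    by (simp add: sum_subtractf)
  also have "\<dots> = ((real n - 2) * ind (x 2 = i) + ind (x 1 = i)) - ((real n - 2) * ind (x k = i) + ind (x 1 = i))"
    using k by (subst tr_sum[where h="\<lambda>q. ind (x q = i)"], simp, subst tr_sum[where h="\<lambda>q. ind (x q = i)"], auto)
  also have "\<dots> = (real n - 2) * fstar i 2 k x"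
    using k by (subst fstar_alt) (auto intro: Sym_inj x simp: algebra_simps)
  finally show "(real n - 2) * fstar i 2 k x = (\<Sum>y\<in>star_nbrs n x. fstar i 2 k y)" by simp
qed

definition K :: "nat \<Rightarrow> nat \<Rightarrow> nat \<Rightarrow> nat \<Rightarrow> nat \<Rightarrow> real" where
  "K n p a q i = (\<Sum>\<pi>\<in>Sym n. ind (\<pi> p = a \<and> \<pi> q = i))"

definition A0 :: "nat \<Rightarrow> nat \<Rightarrow> nat \<Rightarrow> real" where
  "A0 n p a = (\<Sum>\<pi>\<in>Sym n. ind (\<pi> p = a))"

lemma finite_Sym: "finite (Sym n)"
  unfolding Sym_def by (rule finite_permutations) simp

lemma id_Sym: "id \<in> Sym n" unfolding Sym_def using permutes_id by blast

lemma Sym_range: "\<pi> \<in> Sym n \<Longrightarrow> p \<in> {1..n} \<Longrightarrow> \<pi> p \<in> {1..n}"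
  unfolding Sym_def by (simp only: mem_Collect_eq permutes_in_image)

lemma exists_perm2:
  assumes "p \<in> S" "q \<in> S" "p' \<in> S" "q' \<in> S" "p \<noteq> q" "p' \<noteq> q'"
  shows "\<exists>\<tau>. \<tau> permutes S \<and> \<tau> p = p' \<and> \<tau> q = q'"
proof -
  define t0 where "t0 = transpose p p'"
  have t0S: "t0 q \<in> S" using assms by (auto simp: t0_def transpose_def)
  have t0p: "t0 p = p'" by (simp add: t0_def)
  have ne: "t0 q \<noteq> p'" using assms by (auto simp: t0_def transpose_def)
  define \<tau> where "\<tau> = transpose q' (t0 q) \<circ> t0"
  have "\<tau> permutes S" unfolding \<tau>_def t0_def
    using assms t0S by (intro permutes_compose permutes_swap_id) (auto simp: t0_def)
  moreover have "\<tau> p = p'" using t0p ne assms by (simp add: \<tau>_def)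
  moreover have "\<tau> q = q'" by (simp add: \<tau>_def)
  ultimately show ?thesis by blast
qed

lemma K_right:
  assumes "\<tau> permutes {1..n}"
  shows "K n (\<tau> p) a (\<tau> q) i = K n p a q i"
  unfolding K_def using Sym_sum_right[OF assms, of "\<lambda>\<pi>. ind (\<pi> p = a \<and> \<pi> q = i)"] by simp

lemma K_left:
  assumes "\<sigma> permutes {1..n}"
  shows "K n p (\<sigma> a) q (\<sigma> i) = K n p a q i"
proof -
  have inj: "inj \<sigma>" using assms by (rule permutes_inj)
  have "K n p (\<sigma> a) q (\<sigma> i) = (\<Sum>\<pi>\<in>Sym n. ind ((\<sigma> \<circ> \<pi>) p = \<sigma> a \<and> (\<sigma> \<circ> \<pi>) q = \<sigma> i))"
    unfolding K_def using Sym_sum_left[OF assms, of "\<lambda>\<pi>. ind (\<pi> p = \<sigma> a \<and> \<pi> q = \<sigma> i)"] by simp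
  also have "\<dots> = K n p a q i" unfolding K_def using inj by (simp add: inj_eq)
  finally show ?thesis .
qed

lemma K_const:
  assumes "p \<in> {1..n}" "q \<in> {1..n}" "a \<in> {1..n}" "i \<in> {1..n}" "p \<noteq> q" "a \<noteq> i"
  shows "K n p a q i = K n 1 1 2 2"
proof -
  have n: "n \<ge> 2" using assms by auto
  obtain \<tau> where \<tau>: "\<tau> permutes {1..n}" "\<tau> 1 = p" "\<tau> 2 = q"
    using exists_perm2[of 1 "{1..n}" 2 p q] assms n by auto
  obtain \<sigma> where \<sigma>: "\<sigma> permutes {1..n}" "\<sigma> 1 = a" "\<sigma> 2 = i"
    using exists_perm2[of 1 "{1..n}" 2 a i] assms n by auto
  have "K n p a q i = K n 1 a 2 i" using K_right[OF \<tau>(1), of 1 a 2 i] \<tau> by simp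
  also have "\<dots> = K n 1 1 2 2" using K_left[OF \<sigma>(1), of 1 1 2 2] \<sigma> by simp
  finally show ?thesis .
qed

lemma K_same_pos: "K n p a p i = (if a = i then A0 n p a else 0)"
proof (cases "a = i")
  case True then show ?thesis unfolding K_def A0_def by simp
next
  case False
  then have "\<And>\<pi>. ind (\<pi> p = a \<and> \<pi> p = i) = 0" by (auto simp: ind_def)
  then show ?thesis using False unfolding K_def by simp
qed

lemma K_same_val:
  assumes "p \<noteq> q" shows "K n p a q a = 0"
proof -
  have "\<And>\<pi>. \<pi> \<in> Sym n \<Longrightarrow> ind (\<pi> p = a \<and> \<pi> q = a) = 0"
    using assms by (auto simp: ind_def dest!: Sym_inj simp: inj_eq)
  then show ?thesis unfolding K_def by simp
qed

lemma K_out: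
  assumes "p \<in> {1..n}" "a \<notin> {1..n}" shows "K n p a q i = 0" "A0 n p a = 0"
proof -
  have "\<And>\<pi>. \<pi> \<in> Sym n \<Longrightarrow> \<pi> p \<noteq> a" using assms Sym_range by blast
  then show "K n p a q i = 0" "A0 n p a = 0" unfolding K_def A0_def by (auto simp: ind_def)
qed

lemma sum_ind_unique:
  assumes "x \<in> {1..(n::nat)}"
  shows "(\<Sum>i\<in>{1..n}. ind (P \<and> x = i)) = ind P"
proof -
  have "(\<Sum>i\<in>{1..n}. ind (P \<and> x = i)) = (\<Sum>i\<in>{1..n}. if x = i then ind P else 0)"
    by (intro sum.cong) (auto simp: ind_def)
  also have "\<dots> = ind P" using assms by (subst sum.delta') auto
  finally show ?thesis .
qed

lemma A0_val:
  assumes "p \<in> {1..n}" "a \<in> {1..n}" "n \<ge> 2"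
  shows "A0 n p a = (real n - 1) * K n 1 1 2 2"
proof -
  define q where "q = (if p = 1 then 2 else (1::nat))"
  have q: "q \<in> {1..n}" "q \<noteq> p" using assms by (auto simp: q_def)
  have "A0 n p a = (\<Sum>\<pi>\<in>Sym n. \<Sum>i\<in>{1..n}. ind (\<pi> p = a \<and> \<pi> q = i))"
  proof (unfold A0_def, rule sum.cong[OF refl])
    fix \<pi> assume "\<pi> \<in> Sym n"
    then have "\<pi> q \<in> {1..n}" using q Sym_range by blast
    then show "ind (\<pi> p = a) = (\<Sum>i\<in>{1..n}. ind (\<pi> p = a \<and> \<pi> q = i))"
      by (rule sum_ind_unique[symmetric])
  qed
  also have "\<dots> = (\<Sum>i\<in>{1..n}. K n p a q i)" unfolding K_def by (rule sum.swap)
  also have "\<dots> = (\<Sum>i\<in>{1..n}. if i = a then 0 else K n 1 1 2 2)"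
  proof (rule sum.cong[OF refl])
    fix i assume "i \<in> {1..n}"
    then show "K n p a q i = (if i = a then 0 else K n 1 1 2 2)"
      using assms q K_const[of p n q a i] by (auto simp: K_same_val)
  qed
  also have "\<dots> = (\<Sum>i\<in>{1..n} - {a}. K n 1 1 2 2)"
    using assms by (subst sum.remove[of _ a]) (auto intro!: sum.cong)
  also have "\<dots> = (real n - 1) * K n 1 1 2 2" using assms by (simp add: of_nat_diff)
  finally show ?thesis .
qed

lemma B_pos: "n \<ge> 2 \<Longrightarrow> K n 1 1 2 2 > 0"
proof -
  assume "n \<ge> 2"
  have "ind (id 1 = (1::nat) \<and> id 2 = (2::nat)) \<le> K n 1 1 2 2"
    unfolding K_def using member_le_sum[of id "Sym n" "\<lambda>\<pi>. ind (\<pi> 1 = 1 \<and> \<pi> 2 = 2)"] id_Sym finite_Sym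
    by (auto simp: ind_def)
  then show ?thesis by (simp add: ind_def)
qed

lemma K_form:
  assumes "p \<in> {1..n}" "q \<in> {1..n}" "i \<in> {1..n}" "n \<ge> 2"
  shows "K n p a q i = (if a \<notin> {1..n} then 0 else if p = q then (if a = i then (real n - 1) * K n 1 1 2 2 else 0)
     else (if a = i then 0 else K n 1 1 2 2))"
proof (cases "a \<in> {1..n}")
  case False then show ?thesis using assms K_out by simp
next
  case True
  show ?thesis
  proof (cases "p = q")
    case True then show ?thesis using assms \<open>a \<in> {1..n}\<close> by (simp add: K_same_pos A0_val)
  next
    case False then show ?thesis using assms \<open>a \<in> {1..n}\<close> K_const[of p n q a i] by (auto simp: K_same_val)
  qed
qed

definition marg :: "nat \<Rightarrow> ((nat \<Rightarrow> nat) \<Rightarrow> real) \<Rightarrow> nat \<Rightarrow> nat \<Rightarrow> real" where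
  "marg n f p a = (\<Sum>\<pi>\<in>Sym n. ind (\<pi> p = a) * f \<pi>)"

lemma marg_fstar:
  assumes "k \<noteq> 2"
  shows "marg n (fstar i 2 k) p a = K n p a 2 i - K n p a k i"
proof -
  have "marg n (fstar i 2 k) p a = (\<Sum>\<pi>\<in>Sym n. ind (\<pi> p = a \<and> \<pi> 2 = i) - ind (\<pi> p = a \<and> \<pi> k = i))"
    unfolding marg_def
  proof (rule sum.cong[OF refl])
    fix \<pi> assume "\<pi> \<in> Sym n"
    then show "ind (\<pi> p = a) * fstar i 2 k \<pi> = ind (\<pi> p = a \<and> \<pi> 2 = i) - ind (\<pi> p = a \<and> \<pi> k = i)"
      using assms by (subst fstar_alt) (auto intro: Sym_inj simp: ind_def)
  qed
  then show ?thesis unfolding K_def by (simp add: sum_subtractf)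
qed

lemma marg_fstar_form:
  assumes n: "n \<ge> 3" and i: "i \<in> {2..n}" and k: "k \<in> {3..n}" and p: "p \<in> {1..n}"
  shows "marg n (fstar i 2 k) p a = (if a \<in> {1..n} then (ind (p = 2) - ind (p = k)) * K n 1 1 2 2 * (real n * ind (a = i) - 1) else 0)"
proof -
  have "2 \<in> {1..n}" "k \<in> {1..n}" "i \<in> {1..n}" "n \<ge> 2" "k \<noteq> 2" using n i k by auto
  then show ?thesis using p
    by (simp add: marg_fstar K_form[of p n 2 i a] K_form[of p n k i a]) (auto simp: ind_def algebra_simps)
qed

lemma marg_lin:
  "marg n (\<lambda>\<pi>. \<Sum>(i,k)\<in>I. c (i,k) * fstar i 2 k \<pi>) p a = (\<Sum>(i,k)\<in>I. c (i,k) * marg n (fstar i 2 k) p a)"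
  unfolding marg_def
  by (simp add: sum_distrib_left sum_distrib_right case_prod_unfold sum.swap[of _ "Sym n"] mult.assoc mult.left_commute)

definition Dc :: "nat \<Rightarrow> (nat \<times> nat \<Rightarrow> real) \<Rightarrow> nat \<Rightarrow> nat \<Rightarrow> real" where
  "Dc n c k a = (\<Sum>i\<in>{2..n}. c (i,k) * (real n * ind (a = i) - 1))"

lemma Dc_eval: "Dc n c k a = (if a \<in> {2..n} then real n * c (a,k) else 0) - (\<Sum>i\<in>{2..n}. c (i,k))"
proof -
  have "Dc n c k a = (\<Sum>i\<in>{2..n}. (if a = i then real n * c (i,k) else 0)) - (\<Sum>i\<in>{2..n}. c (i,k))"
  proof -
    have "Dc n c k a = (\<Sum>i\<in>{2..n}. (if a = i then real n * c (i,k) else 0) - c (i,k))"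
      unfolding Dc_def by (intro sum.cong refl) (auto simp: ind_def algebra_simps)
    then show ?thesis by (simp add: sum_subtractf)
  qed
  also have "(\<Sum>i\<in>{2..n}. (if a = i then real n * c (i,k) else 0)) = (if a \<in> {2..n} then real n * c (a,k) else 0)"
    by (simp add: sum.delta)
  finally show ?thesis .
qed

lemma lincomb_marg:
  assumes n: "n \<ge> 3" and p: "p \<in> {1..n}" and a: "a \<in> {1..n}"
  shows "(\<Sum>(i,k)\<in>{2..n} \<times> {3..n}. c (i,k) * marg n (fstar i 2 k) p a)
    = K n 1 1 2 2 * (\<Sum>k\<in>{3..n}. (ind (p = 2) - ind (p = k)) * Dc n c k a)"
proof -
  have "(\<Sum>(i,k)\<in>{2..n} \<times> {3..n}. c (i,k) * marg n (fstar i 2 k) p a)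
     = (\<Sum>i\<in>{2..n}. \<Sum>k\<in>{3..n}. c (i,k) * marg n (fstar i 2 k) p a)"
    by (simp add: sum.cartesian_product)
  also have "\<dots> = (\<Sum>i\<in>{2..n}. \<Sum>k\<in>{3..n}. c (i,k) * ((ind (p = 2) - ind (p = k)) * K n 1 1 2 2 * (real n * ind (a = i) - 1)))"
    using n p a by (intro sum.cong refl) (simp add: marg_fstar_form)
  also have "\<dots> = (\<Sum>k\<in>{3..n}. \<Sum>i\<in>{2..n}. c (i,k) * ((ind (p = 2) - ind (p = k)) * K n 1 1 2 2 * (real n * ind (a = i) - 1)))"
    by (rule sum.swap)
  also have "\<dots> = K n 1 1 2 2 * (\<Sum>k\<in>{3..n}. (ind (p = 2) - ind (p = k)) * Dc n c k a)"
    unfolding Dc_def by (simp add: sum_distrib_left algebra_simps)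
  finally show ?thesis .
qed

lemma part2:
  assumes n: "n \<ge> 3"
    and h: "\<forall>p\<in>Sym n. (\<Sum>(i,k)\<in>{2..n} \<times> {3..n}. c (i,k) * fstar i 2 k p) = 0"
    and ik: "ik \<in> {2..n} \<times> {3..n}"
  shows "c ik = 0"
proof -
  obtain i0 k0 where ik0: "ik = (i0,k0)" "i0 \<in> {2..n}" "k0 \<in> {3..n}" using ik by auto
  have B: "K n 1 1 2 2 > 0" using n by (intro B_pos) auto
  have D0: "Dc n c k0 a = 0" if a: "a \<in> {1..n}" for a
  proof -
    have "0 = marg n (\<lambda>\<pi>. \<Sum>(i,k)\<in>{2..n} \<times> {3..n}. c (i,k) * fstar i 2 k \<pi>) k0 a"
      unfolding marg_def using h by simp
    also have "\<dots> = K n 1 1 2 2 * (\<Sum>k\<in>{3..n}. (ind (k0 = 2) - ind (k0 = k)) * Dc n c k a)"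
      using n ik0 a by (simp add: marg_lin lincomb_marg)
    also have "(\<Sum>k\<in>{3..n}. (ind (k0 = 2) - ind (k0 = k)) * Dc n c k a) = - Dc n c k0 a"
    proof -
      have "(\<Sum>k\<in>{3..n}. (ind (k0 = 2) - ind (k0 = k)) * Dc n c k a) = (\<Sum>k\<in>{3..n}. - (if k0 = k then Dc n c k a else 0))"
        using ik0 by (intro sum.cong refl) (auto simp: ind_def)
      also have "\<dots> = - Dc n c k0 a" using ik0 by (simp add: sum_negf)
      finally show ?thesis .
    qed
    finally show ?thesis using B by simp
  qed
  have s: "(\<Sum>i\<in>{2..n}. c (i,k0)) = 0" using D0[of 1] n by (simp add: Dc_eval)
  have "real n * c (i0,k0) = 0" using D0[of i0] ik0 s by (simp add: Dc_eval)
  then show ?thesis using ik0 n by simp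
qed

definition eigJ :: "nat \<Rightarrow> ((nat \<Rightarrow> nat) \<Rightarrow> real) \<Rightarrow> bool" where
  "eigJ n g = (\<forall>\<pi>\<in>Sym n. (real n - 2) * g \<pi> = (\<Sum>j\<in>{2..n}. g (\<pi> \<circ> transpose 1 j)))"

lemma marg_pos1:
  assumes "eigJ n f"
  shows "(real n - 2) * marg n f 1 a = (\<Sum>j\<in>{2..n}. marg n f j a)"
proof -
  have "(real n - 2) * marg n f 1 a = (\<Sum>j\<in>{2..n}. \<Sum>\<pi>\<in>Sym n. ind ((\<pi> \<circ> transpose 1 j) 1 = a) * f \<pi>)"
    unfolding marg_def using lemmaG[of n f "\<lambda>\<pi>. ind (\<pi> 1 = a)"] assms by (simp add: eigJ_def)
  also have "\<dots> = (\<Sum>j\<in>{2..n}. marg n f j a)" unfolding marg_def by simp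
  finally show ?thesis .
qed

lemma marg_posk:
  assumes "eigJ n f" "q \<in> {2..n}"
  shows "marg n f 1 a = 0"
proof -
  have "(real n - 2) * marg n f q a = (\<Sum>j\<in>{2..n}. \<Sum>\<pi>\<in>Sym n. ind ((\<pi> \<circ> transpose 1 j) q = a) * f \<pi>)"
    unfolding marg_def using lemmaG[of n f "\<lambda>\<pi>. ind (\<pi> q = a)"] assms by (simp add: eigJ_def)
  also have "\<dots> = (\<Sum>\<pi>\<in>Sym n. (\<Sum>j\<in>{2..n}. ind (\<pi> (transpose 1 j q) = a)) * f \<pi>)"
    by (simp add: sum.swap[of _ "{2..n}"] sum_distrib_right)
  also have "\<dots> = (\<Sum>\<pi>\<in>Sym n. ((real n - 2) * ind (\<pi> q = a) + ind (\<pi> 1 = a)) * f \<pi>)"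
  proof (rule sum.cong[OF refl])
    fix \<pi> :: "nat \<Rightarrow> nat"
    show "(\<Sum>j\<in>{2..n}. ind (\<pi> (transpose 1 j q) = a)) * f \<pi> = ((real n - 2) * ind (\<pi> q = a) + ind (\<pi> 1 = a)) * f \<pi>"
      using tr_sum[OF assms(2), of "\<lambda>x. ind (\<pi> x = a)"] by simp
  qed
  also have "\<dots> = (real n - 2) * marg n f q a + marg n f 1 a"
    unfolding marg_def by (simp add: distrib_right sum.distrib sum_distrib_left mult.assoc)
  finally show ?thesis by simp
qed

lemma marg_total:
  assumes "p \<in> {1..n}"
  shows "(\<Sum>a\<in>{1..n}. marg n f p a) = (\<Sum>\<pi>\<in>Sym n. f \<pi>)"
proof -
  have "(\<Sum>a\<in>{1..n}. marg n f p a) = (\<Sum>\<pi>\<in>Sym n. (\<Sum>a\<in>{1..n}. ind (True \<and> \<pi> p = a)) * f \<pi>)"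
    unfolding marg_def by (subst sum.swap) (simp add: sum_distrib_right)
  also have "\<dots> = (\<Sum>\<pi>\<in>Sym n. f \<pi>)"
  proof (rule sum.cong[OF refl])
    fix \<pi> assume "\<pi> \<in> Sym n"
    then have "\<pi> p \<in> {1..n}" using assms Sym_range by blast
    then show "(\<Sum>a\<in>{1..n}. ind (True \<and> \<pi> p = a)) * f \<pi> = f \<pi>"
      by (simp only: sum_ind_unique) (simp add: ind_def)
  qed
  finally show ?thesis .
qed

lemma marg_out:
  assumes "p \<in> {1..n}" "a \<notin> {1..n}" shows "marg n f p a = 0"
proof -
  have "\<And>\<pi>. \<pi> \<in> Sym n \<Longrightarrow> \<pi> p \<noteq> a" using assms Sym_range by blast
  then show ?thesis unfolding marg_def by (simp add: ind_def)
qed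

lemma sum_ind_perm:
  assumes "\<pi> \<in> Sym n" "v \<in> {1..n}"
  shows "(\<Sum>j\<in>{1..n}. ind (\<pi> j = v)) = 1"
proof -
  have p: "\<pi> permutes {1..n}" using assms by (simp add: Sym_def)
  have "inv \<pi> permutes {1..n}" using p by (rule permutes_inv)
  then have iv: "inv \<pi> v \<in> {1..n}" using assms(2) by (simp only: permutes_in_image)
  have "(\<Sum>j\<in>{1..n}. ind (\<pi> j = v)) = (\<Sum>j\<in>{1..n}. ind (True \<and> inv \<pi> v = j))"
    using p by (intro sum.cong refl) (simp add: permutes_inv_eq)
  also have "\<dots> = 1" using iv by (simp add: sum_ind_unique ind_def)
  finally show ?thesis .
qed

definition MS :: "nat \<Rightarrow> ((nat \<Rightarrow> nat) \<Rightarrow> real) \<Rightarrow> nat set \<Rightarrow> (nat \<Rightarrow> nat) \<Rightarrow> real" where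
  "MS n g S \<alpha> = (\<Sum>\<pi>\<in>Sym n. ind (\<forall>p\<in>S. \<pi> p = \<alpha> p) * g \<pi>)"

lemma ball_transpose:
  "(\<forall>p\<in>S. \<pi> (transpose a b p) = \<alpha> p) \<longleftrightarrow> (\<forall>q\<in>transpose a b ` S. \<pi> q = \<alpha> (transpose a b q))"
  by auto

lemma step1:
  assumes eig: "eigJ n g" and S: "S \<subseteq> {1..n}" "1 \<in> S"
    and IH: "MS n g (S - {1}) \<alpha> = 0" and v: "\<alpha> 1 \<in> {1..n}"
  shows "(real n - 1) * MS n g S \<alpha> = (\<Sum>j\<in>S - {1}. MS n g S (\<alpha> \<circ> transpose 1 j))"
proof -
  define w where "w = (\<lambda>\<pi>::nat\<Rightarrow>nat. ind (\<forall>p\<in>S. \<pi> p = \<alpha> p))"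
  define W' where "W' = (\<lambda>\<pi>::nat\<Rightarrow>nat. ind (\<forall>p\<in>S - {1}. \<pi> p = \<alpha> p))"
  define C where "C = (\<Sum>j\<in>S - {1}. ind (\<alpha> j = \<alpha> 1))"
  have finS: "finite S" using S finite_subset by blast
  have G: "(real n - 2) * MS n g S \<alpha> = (\<Sum>j\<in>{2..n}. \<Sum>\<pi>\<in>Sym n. w (\<pi> \<circ> transpose 1 j) * g \<pi>)"
    unfolding MS_def w_def using lemmaG[of n g] eig by (simp add: eigJ_def)
  have spl: "{2..n} = (S - {1}) \<union> ({2..n} - S)" using S by auto
  have "(\<Sum>j\<in>{2..n}. \<Sum>\<pi>\<in>Sym n. w (\<pi> \<circ> transpose 1 j) * g \<pi>)
      = (\<Sum>j\<in>S - {1}. \<Sum>\<pi>\<in>Sym n. w (\<pi> \<circ> transpose 1 j) * g \<pi>)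
      + (\<Sum>j\<in>{2..n} - S. \<Sum>\<pi>\<in>Sym n. w (\<pi> \<circ> transpose 1 j) * g \<pi>)"
    by (subst spl, rule sum.union_disjoint) (use finS in auto)
  also have "(\<Sum>j\<in>S - {1}. \<Sum>\<pi>\<in>Sym n. w (\<pi> \<circ> transpose 1 j) * g \<pi>) = (\<Sum>j\<in>S - {1}. MS n g S (\<alpha> \<circ> transpose 1 j))"
  proof (rule sum.cong[OF refl])
    fix j assume j: "j \<in> S - {1}"
    have im: "transpose 1 j ` S = S" using j S by (intro transpose_image_eq) auto
    show "(\<Sum>\<pi>\<in>Sym n. w (\<pi> \<circ> transpose 1 j) * g \<pi>) = MS n g S (\<alpha> \<circ> transpose 1 j)"
    proof -
      have "\<And>\<pi>. (\<forall>p\<in>S. \<pi> (transpose 1 j p) = \<alpha> p) \<longleftrightarrow> (\<forall>p\<in>S. \<pi> p = \<alpha> (transpose 1 j p))"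
      proof
        fix \<pi> :: "nat \<Rightarrow> nat"
        have tS: "\<And>p. p \<in> S \<Longrightarrow> transpose 1 j p \<in> S" using im by blast
        show "(\<forall>p\<in>S. \<pi> (transpose 1 j p) = \<alpha> p) \<Longrightarrow> (\<forall>p\<in>S. \<pi> p = \<alpha> (transpose 1 j p))"
          by (metis tS transpose_involutory)
        show "(\<forall>p\<in>S. \<pi> p = \<alpha> (transpose 1 j p)) \<Longrightarrow> (\<forall>p\<in>S. \<pi> (transpose 1 j p) = \<alpha> p)"
          by (metis tS transpose_involutory)
      qed
      then show ?thesis unfolding MS_def w_def by simp
    qed
  qed
  also have "(\<Sum>j\<in>{2..n} - S. \<Sum>\<pi>\<in>Sym n. w (\<pi> \<circ> transpose 1 j) * g \<pi>) = - MS n g S \<alpha>"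
  proof -
    have "(\<Sum>j\<in>{2..n} - S. \<Sum>\<pi>\<in>Sym n. w (\<pi> \<circ> transpose 1 j) * g \<pi>)
        = (\<Sum>j\<in>{2..n} - S. \<Sum>\<pi>\<in>Sym n. ind (\<pi> j = \<alpha> 1) * W' \<pi> * g \<pi>)"
    proof (intro sum.cong refl)
      fix j \<pi> assume j: "j \<in> {2..n} - S"
      have "(\<forall>p\<in>S. (\<pi> \<circ> transpose 1 j) p = \<alpha> p) \<longleftrightarrow> \<pi> j = \<alpha> 1 \<and> (\<forall>p\<in>S - {1}. \<pi> p = \<alpha> p)"
      proof -
        have tp: "\<And>p. p \<in> S - {1} \<Longrightarrow> transpose 1 j p = p" using j by (metis DiffD1 DiffD2 insertCI transpose_apply_other)
        have b: "(\<forall>p\<in>S. P p) \<longleftrightarrow> P 1 \<and> (\<forall>p\<in>S - {1}. P p)" for P using S(2) by blast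
        have "(\<forall>p\<in>S - {1}. \<pi> (transpose 1 j p) = \<alpha> p) \<longleftrightarrow> (\<forall>p\<in>S - {1}. \<pi> p = \<alpha> p)"
          using tp by simp
        then show ?thesis using b[of "\<lambda>p. (\<pi> \<circ> transpose 1 j) p = \<alpha> p"] by simp
      qed
      then show "w (\<pi> \<circ> transpose 1 j) * g \<pi> = ind (\<pi> j = \<alpha> 1) * W' \<pi> * g \<pi>"
        unfolding w_def W'_def by (auto simp: ind_def)
    qed
    also have "\<dots> = (\<Sum>\<pi>\<in>Sym n. (\<Sum>j\<in>{2..n} - S. ind (\<pi> j = \<alpha> 1)) * W' \<pi> * g \<pi>)"
      by (subst sum.swap) (simp add: sum_distrib_right)
    also have "\<dots> = (\<Sum>\<pi>\<in>Sym n. (1 - C) * (W' \<pi> * g \<pi>) - w \<pi> * g \<pi>)"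
    proof (rule sum.cong[OF refl])
      fix \<pi> assume \<pi>: "\<pi> \<in> Sym n"
      have tot: "(\<Sum>j\<in>{1..n}. ind (\<pi> j = \<alpha> 1)) = 1" using sum_ind_perm[OF \<pi> v] .
      have spl2: "{1..n} = ({2..n} - S) \<union> S"
      proof (rule set_eqI)
        fix x show "x \<in> {1..n} \<longleftrightarrow> x \<in> ({2..n} - S) \<union> S"
          using S by (cases "x = 1") auto
      qed
      have "(\<Sum>j\<in>{1..n}. ind (\<pi> j = \<alpha> 1)) = (\<Sum>j\<in>{2..n} - S. ind (\<pi> j = \<alpha> 1)) + (\<Sum>j\<in>S. ind (\<pi> j = \<alpha> 1))"
        by (subst spl2, rule sum.union_disjoint) (use finS in auto)
      moreover have "(\<Sum>j\<in>S. ind (\<pi> j = \<alpha> 1)) = ind (\<pi> 1 = \<alpha> 1) + (\<Sum>j\<in>S - {1}. ind (\<pi> j = \<alpha> 1))"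
        using S(2) finS by (simp add: sum.remove)
      ultimately have e1: "(\<Sum>j\<in>{2..n} - S. ind (\<pi> j = \<alpha> 1)) = 1 - ind (\<pi> 1 = \<alpha> 1) - (\<Sum>j\<in>S - {1}. ind (\<pi> j = \<alpha> 1))"
        using tot by simp
      show "(\<Sum>j\<in>{2..n} - S. ind (\<pi> j = \<alpha> 1)) * W' \<pi> * g \<pi> = (1 - C) * (W' \<pi> * g \<pi>) - w \<pi> * g \<pi>"
      proof (cases "\<forall>p\<in>S - {1}. \<pi> p = \<alpha> p")
        case True
        have "(\<Sum>j\<in>S - {1}. ind (\<pi> j = \<alpha> 1)) = C" unfolding C_def using True by (intro sum.cong) auto
        moreover have "(\<forall>p\<in>S. \<pi> p = \<alpha> p) \<longleftrightarrow> \<pi> 1 = \<alpha> 1" using True S(2) by blast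
        then have "w \<pi> = ind (\<pi> 1 = \<alpha> 1)" unfolding w_def by simp
        moreover have "W' \<pi> = 1" unfolding W'_def using True by (simp add: ind_def)
        ultimately have "(\<Sum>j\<in>{2..n} - S. ind (\<pi> j = \<alpha> 1)) * W' \<pi> * g \<pi> = (1 - ind (\<pi> 1 = \<alpha> 1) - C) * g \<pi>"
          "w \<pi> = ind (\<pi> 1 = \<alpha> 1)" "W' \<pi> = 1" using e1 by simp_all
        then show ?thesis by (simp add: algebra_simps)
      next
        case False
        then have "\<not> (\<forall>p\<in>S. \<pi> p = \<alpha> p)" by auto
        then have "w \<pi> = 0" "W' \<pi> = 0" using False by (simp_all add: W'_def w_def ind_def)
        then show ?thesis by simp
      qed
    qed
    also have "\<dots> = (1 - C) * MS n g (S - {1}) \<alpha> - MS n g S \<alpha>"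
      unfolding MS_def W'_def w_def by (simp add: sum_subtractf sum_distrib_left)
    finally show ?thesis using IH by simp
  qed
  finally have X: "(\<Sum>j\<in>{2..n}. \<Sum>\<pi>\<in>Sym n. w (\<pi> \<circ> transpose 1 j) * g \<pi>) = (\<Sum>j\<in>S - {1}. MS n g S (\<alpha> \<circ> transpose 1 j)) + - MS n g S \<alpha>" .
  have "(real n - 2) * MS n g S \<alpha> = (\<Sum>j\<in>S - {1}. MS n g S (\<alpha> \<circ> transpose 1 j)) - MS n g S \<alpha>"
    using G X by linarith
  then show ?thesis by (simp add: algebra_simps)
qed

lemma ball_transpose2:
  "(\<forall>p\<in>S. \<pi> (transpose a b p) = \<alpha> p) \<longleftrightarrow> (\<forall>q\<in>transpose a b ` S. \<pi> q = \<alpha> (transpose a b q))"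
proof
  assume H: "\<forall>p\<in>S. \<pi> (transpose a b p) = \<alpha> p"
  show "\<forall>q\<in>transpose a b ` S. \<pi> q = \<alpha> (transpose a b q)"
  proof
    fix q assume "q \<in> transpose a b ` S"
    then obtain p where "p \<in> S" "q = transpose a b p" by blast
    then show "\<pi> q = \<alpha> (transpose a b q)" using H by simp
  qed
next
  assume H: "\<forall>q\<in>transpose a b ` S. \<pi> q = \<alpha> (transpose a b q)"
  show "\<forall>p\<in>S. \<pi> (transpose a b p) = \<alpha> p"
  proof
    fix p assume "p \<in> S"
    then have "transpose a b p \<in> transpose a b ` S" by blast
    then have "\<pi> (transpose a b p) = \<alpha> (transpose a b (transpose a b p))" using H by blast
    then show "\<pi> (transpose a b p) = \<alpha> p" by simp
  qed
qed

lemma step2: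
  assumes eig: "eigJ n g" and S: "S \<subseteq> {2..n}" "card S = m" "m \<ge> 2"
    and IH: "\<forall>T \<beta>. T \<subseteq> {1..n} \<longrightarrow> 1 \<in> T \<longrightarrow> card T = m \<longrightarrow> MS n g T \<beta> = 0"
  shows "MS n g S \<alpha> = 0"
proof -
  define w where "w = (\<lambda>\<pi>::nat\<Rightarrow>nat. ind (\<forall>p\<in>S. \<pi> p = \<alpha> p))"
  have finS: "finite S" using S finite_subset by blast
  have mle: "m \<le> n - 1" using S card_mono[of "{2..n}" S] by simp
  have G: "(real n - 2) * MS n g S \<alpha> = (\<Sum>j\<in>{2..n}. \<Sum>\<pi>\<in>Sym n. w (\<pi> \<circ> transpose 1 j) * g \<pi>)"
    unfolding MS_def w_def using lemmaG[of n g] eig by (simp add: eigJ_def)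
  have spl: "{2..n} = S \<union> ({2..n} - S)" using S by auto
  have "(\<Sum>j\<in>{2..n}. \<Sum>\<pi>\<in>Sym n. w (\<pi> \<circ> transpose 1 j) * g \<pi>)
      = (\<Sum>j\<in>S. \<Sum>\<pi>\<in>Sym n. w (\<pi> \<circ> transpose 1 j) * g \<pi>)
      + (\<Sum>j\<in>{2..n} - S. \<Sum>\<pi>\<in>Sym n. w (\<pi> \<circ> transpose 1 j) * g \<pi>)"
    by (subst spl, rule sum.union_disjoint) (use finS in auto)
  also have "(\<Sum>j\<in>S. \<Sum>\<pi>\<in>Sym n. w (\<pi> \<circ> transpose 1 j) * g \<pi>) = 0"
  proof (rule sum.neutral, rule ballI)
    fix j assume j: "j \<in> S"
    have jn: "j \<in> {1..n}" using j S by auto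
    have "(\<Sum>\<pi>\<in>Sym n. w (\<pi> \<circ> transpose 1 j) * g \<pi>) = MS n g (transpose 1 j ` S) (\<alpha> \<circ> transpose 1 j)"
      unfolding MS_def w_def using ball_transpose2[of S _ 1 j \<alpha>] by simp
    also have "\<dots> = 0"
    proof -
      have "inj_on (transpose (1::nat) j) S" by (auto intro: inj_onI transpose_eq_imp_eq)
      then have "card (transpose 1 j ` S) = m" using S by (simp add: card_image)
      moreover have "1 \<in> transpose 1 j ` S" using j by (metis imageI transpose_apply_second)
      moreover have "transpose 1 j ` S \<subseteq> {1..n}"
      proof
        fix x assume "x \<in> transpose 1 j ` S"
        then obtain p where p: "p \<in> S" "x = transpose 1 j p" by blast
        have "p \<in> {1..n}" using p S by auto
        then show "x \<in> {1..n}" using p tr_perm[OF jn] by (simp only: permutes_in_image)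
      qed
      ultimately show ?thesis using IH by blast
    qed
    finally show "(\<Sum>\<pi>\<in>Sym n. w (\<pi> \<circ> transpose 1 j) * g \<pi>) = 0" .
  qed
  also have "(\<Sum>j\<in>{2..n} - S. \<Sum>\<pi>\<in>Sym n. w (\<pi> \<circ> transpose 1 j) * g \<pi>) = (\<Sum>j\<in>{2..n} - S. MS n g S \<alpha>)"
  proof (intro sum.cong refl)
    fix j assume j: "j \<in> {2..n} - S"
    have "\<And>p. p \<in> S \<Longrightarrow> transpose 1 j p = p" proof -
      fix p assume p: "p \<in> S"
      then have "p \<noteq> 1" "p \<noteq> j" using S j by auto
      then show "transpose 1 j p = p" by simp
    qed
    then have "\<And>\<pi>. w (\<pi> \<circ> transpose 1 j) = w \<pi>" unfolding w_def by simp
    then show "(\<Sum>\<pi>\<in>Sym n. w (\<pi> \<circ> transpose 1 j) * g \<pi>) = MS n g S \<alpha>" unfolding MS_def w_def by simp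
  qed
  also have "\<dots> = real (n - 1 - m) * MS n g S \<alpha>"
    using S finS by (simp add: card_Diff_subset)
  finally have X: "(\<Sum>j\<in>{2..n}. \<Sum>\<pi>\<in>Sym n. w (\<pi> \<circ> transpose 1 j) * g \<pi>) = 0 + real (n - 1 - m) * MS n g S \<alpha>" .
  have "(real n - 2) * MS n g S \<alpha> = real (n - 1 - m) * MS n g S \<alpha>" using G X by linarith
  moreover have "real (n - 1 - m) = real n - 1 - real m" using mle S by (simp add: of_nat_diff)
  ultimately have "(real m - 1) * MS n g S \<alpha> = 0" by (simp add: algebra_simps)
  then show ?thesis using S by simp
qed

lemma MS_bound: "\<bar>MS n g S \<alpha>\<bar> \<le> (\<Sum>\<pi>\<in>Sym n. \<bar>g \<pi>\<bar>)"
proof -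
  have "\<bar>MS n g S \<alpha>\<bar> \<le> (\<Sum>\<pi>\<in>Sym n. \<bar>ind (\<forall>p\<in>S. \<pi> p = \<alpha> p) * g \<pi>\<bar>)"
    unfolding MS_def by (rule sum_abs)
  also have "\<dots> \<le> (\<Sum>\<pi>\<in>Sym n. \<bar>g \<pi>\<bar>)"
    by (rule sum_mono) (simp add: ind_def abs_mult)
  finally show ?thesis .
qed

lemma step3:
  assumes eig: "eigJ n g" and m: "m \<ge> 2" "m \<le> n - 1"
    and IH: "\<forall>T \<beta>. T \<subseteq> {1..n} \<longrightarrow> card T = m - 1 \<longrightarrow> MS n g T \<beta> = 0"
  shows "\<forall>S \<alpha>. S \<subseteq> {1..n} \<longrightarrow> 1 \<in> S \<longrightarrow> card S = m \<longrightarrow> MS n g S \<alpha> = 0"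
proof -
  define V where "V = {\<bar>MS n g S \<alpha>\<bar> | S \<alpha>. S \<subseteq> {1..n} \<and> 1 \<in> S \<and> card S = m}"
  define Kc where "Kc = Sup V"
  have bdd: "bdd_above V" unfolding V_def using MS_bound by (intro bdd_aboveI) auto
  have sm: "{1..m} \<subseteq> {1..n}" "1 \<in> {1..m}" "card {1..m} = m" using m by auto
  have ne: "V \<noteq> {}" unfolding V_def using sm by blast
  have up: "\<bar>MS n g S \<alpha>\<bar> \<le> Kc" if "S \<subseteq> {1..n}" "1 \<in> S" "card S = m" for S \<alpha>
    unfolding Kc_def using that bdd by (intro cSup_upper) (auto simp: V_def)
  have K0: "Kc \<ge> 0" using up[OF sm, of id] by (meson abs_ge_zero order_trans)
  have key: "(real n - 1) * x \<le> (real m - 1) * Kc" if "x \<in> V" for x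
  proof -
    obtain S \<alpha> where S: "S \<subseteq> {1..n}" "1 \<in> S" "card S = m" and x: "x = \<bar>MS n g S \<alpha>\<bar>"
      using \<open>x \<in> V\<close> unfolding V_def by blast
    have finS: "finite S" using S finite_subset by blast
    show ?thesis
    proof (cases "\<alpha> 1 \<in> {1..n}")
      case False
      have "\<And>\<pi>. \<pi> \<in> Sym n \<Longrightarrow> \<pi> 1 \<noteq> \<alpha> 1" using False Sym_range[of _ n 1] S by fastforce
      then have "MS n g S \<alpha> = 0" unfolding MS_def using S(2) by (intro sum.neutral) (auto simp: ind_def)
      then show ?thesis using x K0 m by simp
    next
      case True
      have "card (S - {1}) = m - 1" "S - {1} \<subseteq> {1..n}" using S finS by auto
      then have IH1: "MS n g (S - {1}) \<alpha> = 0" using IH by blast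
      have "(real n - 1) * MS n g S \<alpha> = (\<Sum>j\<in>S - {1}. MS n g S (\<alpha> \<circ> transpose 1 j))"
        by (rule step1[OF eig S(1,2) IH1 True])
      moreover have "(real n - 1) * x = \<bar>(real n - 1) * MS n g S \<alpha>\<bar>"
        using x m by (simp add: abs_mult)
      ultimately have "(real n - 1) * x = \<bar>\<Sum>j\<in>S - {1}. MS n g S (\<alpha> \<circ> transpose 1 j)\<bar>"
        by simp
      also have "\<dots> \<le> (\<Sum>j\<in>S - {1}. \<bar>MS n g S (\<alpha> \<circ> transpose 1 j)\<bar>)" by (rule sum_abs)
      also have "\<dots> \<le> (\<Sum>j\<in>S - {1}. Kc)"
      proof (rule sum_mono)
        fix j show "\<bar>MS n g S (\<alpha> \<circ> transpose 1 j)\<bar> \<le> Kc" using up[OF S] .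
      qed
      also have "\<dots> = (real m - 1) * Kc" using S finS m by (simp add: of_nat_diff)
      finally show ?thesis .
    qed
  qed
  have "Kc \<le> (real m - 1) * Kc / (real n - 1)"
    unfolding Kc_def[symmetric]
  proof (subst Kc_def, rule cSup_least[OF ne])
    fix x assume "x \<in> V"
    then show "x \<le> (real m - 1) * Kc / (real n - 1)" using key[of x] m by (simp add: field_simps)
  qed
  then have "(real n - 1) * Kc \<le> (real m - 1) * Kc" using m by (simp add: field_simps)
  then have "(real n - real m) * Kc \<le> 0" by (simp add: algebra_simps)
  moreover have "real n - real m > 0" using m by linarith
  ultimately have "Kc \<le> 0" by (simp add: mult_le_0_iff)
  show ?thesis
  proof (intro allI impI)
    fix S \<alpha> assume "S \<subseteq> {1..n}" "1 \<in> S" "card S = m"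
    then have "\<bar>MS n g S \<alpha>\<bar> \<le> Kc" by (rule up)
    then show "MS n g S \<alpha> = 0" using \<open>Kc \<le> 0\<close> by simp
  qed
qed

lemma all_levels:
  assumes eig: "eigJ n g" and n: "n \<ge> 3"
    and bs: "\<forall>p\<in>{1..n}. \<forall>a. marg n g p a = 0"
    and m: "1 \<le> m"
  shows "m \<le> n - 1 \<longrightarrow> (\<forall>S \<alpha>. S \<subseteq> {1..n} \<longrightarrow> card S = m \<longrightarrow> MS n g S \<alpha> = 0)"
  using m
proof (induction m rule: nat_induct_at_least)
  case base
  show ?case
  proof (intro impI allI)
    fix S \<alpha> assume S: "S \<subseteq> {1..n}" "card S = 1"
    then obtain p where p: "S = {p}" using card_1_singletonE[of S] by blast
    have "MS n g S \<alpha> = marg n g p (\<alpha> p)" unfolding MS_def marg_def p by simp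
    then show "MS n g S \<alpha> = 0" using bs S p by auto
  qed
next
  case (Suc m)
  show ?case
  proof (intro impI allI)
    fix S \<alpha> assume le: "Suc m \<le> n - 1" and S: "S \<subseteq> {1..n}" "card S = Suc m"
    have IH: "\<forall>T \<beta>. T \<subseteq> {1..n} \<longrightarrow> card T = Suc m - 1 \<longrightarrow> MS n g T \<beta> = 0"
      using Suc le by simp
    have one: "\<forall>S \<alpha>. S \<subseteq> {1..n} \<longrightarrow> 1 \<in> S \<longrightarrow> card S = Suc m \<longrightarrow> MS n g S \<alpha> = 0"
      using step3[OF eig _ le IH] Suc by simp
    show "MS n g S \<alpha> = 0"
    proof (cases "1 \<in> S")
      case True then show ?thesis using one S by blast
    next
      case False
      then have "S \<subseteq> {2..n}" using S by (auto simp: subset_iff) (metis One_nat_def Suc_1 Suc_le_eq le_neq_implies_less)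
      then show ?thesis using step2[OF eig _ S(2)] one Suc by simp
    qed
  qed
qed

lemma g_zero:
  assumes eig: "eigJ n g" and n: "n \<ge> 3"
    and base: "\<forall>p\<in>{1..n}. \<forall>a. marg n g p a = 0"
    and \<pi>0: "\<pi>0 \<in> Sym n"
  shows "g \<pi>0 = 0"
proof -
  have lev: "\<forall>S \<alpha>. S \<subseteq> {1..n} \<longrightarrow> card S = n - 1 \<longrightarrow> MS n g S \<alpha> = 0"
    using all_levels[OF eig n base, of "n - 1"] n by simp
  have p0: "\<pi>0 permutes {1..n}" using \<pi>0 by (simp add: Sym_def)
  have eq: "(\<forall>p\<in>{1..n-1}. \<pi> p = \<pi>0 p) \<longleftrightarrow> \<pi> = \<pi>0" if \<pi>: "\<pi> \<in> Sym n" for \<pi>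
  proof
    assume H: "\<forall>p\<in>{1..n-1}. \<pi> p = \<pi>0 p"
    have p: "\<pi> permutes {1..n}" using \<pi> by (simp add: Sym_def)
    have "\<pi> n \<in> {1..n}" using n Sym_range[OF \<pi>] by auto
    then have "\<pi> n \<in> \<pi>0 ` {1..n}" using permutes_image[OF p0] by simp
    then obtain q where q: "q \<in> {1..n}" "\<pi> n = \<pi>0 q" by blast
    have "q = n"
    proof (rule ccontr)
      assume "q \<noteq> n"
      then have "q \<in> {1..n-1}" using q by auto
      then have "\<pi> q = \<pi> n" using H q by simp
      then have "q = n" using permutes_inj[OF p] by (simp add: inj_eq)
      then show False using \<open>q \<noteq> n\<close> by simp
    qed
    show "\<pi> = \<pi>0"
    proof
      fix x show "\<pi> x = \<pi>0 x"
      proof (cases "x \<in> {1..n}")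
        case True
        then show ?thesis using H q \<open>q = n\<close> by (cases "x = n") auto
      next
        case False
        then show ?thesis using permutes_not_in[OF p] permutes_not_in[OF p0] by simp
      qed
    qed
  qed simp
  have "MS n g {1..n-1} \<pi>0 = (\<Sum>\<pi>\<in>Sym n. if \<pi> = \<pi>0 then g \<pi> else 0)"
    unfolding MS_def
  proof (rule sum.cong[OF refl])
    fix \<pi> assume "\<pi> \<in> Sym n"
    then show "ind (\<forall>p\<in>{1..n-1}. \<pi> p = \<pi>0 p) * g \<pi> = (if \<pi> = \<pi>0 then g \<pi> else 0)"
      using eq[of \<pi>] by (simp add: ind_def)
  qed
  also have "\<dots> = g \<pi>0" using \<pi>0 finite_Sym by simp
  finally show ?thesis using lev n by auto
qed

lemma sum_split1:
  assumes "(n::nat) \<ge> 1"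
  shows "(\<Sum>a\<in>{1..n}. h a) = h 1 + (\<Sum>a\<in>{2..n}. (h a :: real))"
proof -
  have "{1..n} = insert 1 {2..n}" using assms by auto
  then show ?thesis by simp
qed

lemma sum_split2:
  assumes "(n::nat) \<ge> 2"
  shows "(\<Sum>a\<in>{2..n}. h a) = h 2 + (\<Sum>a\<in>{3..n}. (h a :: real))"
proof -
  have "{2..n} = insert 2 {3..n}" using assms by auto
  then show ?thesis by simp
qed

lemma D_calc:
  assumes c: "\<forall>i. c (i,k) = (M k 1 - M k i) / (real n * B)"
    and s: "(\<Sum>a\<in>{1..n}. M k a) = 0" and B: "B \<noteq> 0" and n: "n \<ge> 2" and a: "a \<in> {1..n}"
  shows "Dc n c k a = - M k a / B"
proof -
  have s2: "(\<Sum>i\<in>{2..n}. M k i) = - M k 1" using s sum_split1[of n "M k"] n by simp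
  have "(\<Sum>i\<in>{2..n}. c (i,k)) = (\<Sum>i\<in>{2..n}. (M k 1 - M k i)) / (real n * B)"
    using c by (simp add: sum_divide_distrib)
  also have "\<dots> = (real (n - 1) * M k 1 + M k 1) / (real n * B)"
    using s2 n by (simp add: sum_subtractf)
  also have "\<dots> = M k 1 / B" using n B by (simp add: of_nat_diff field_simps)
  finally have sc: "(\<Sum>i\<in>{2..n}. c (i,k)) = M k 1 / B" .
  show ?thesis
  proof (cases "a = 1")
    case True then show ?thesis using sc by (simp add: Dc_eval)
  next
    case False
    then have "a \<in> {2..n}" using a by auto
    then have "Dc n c k a = real n * c (a,k) - M k 1 / B" using sc by (simp add: Dc_eval)
    moreover have "real n * c (a,k) = (M k 1 - M k a) / B" using c n by simp
    ultimately show ?thesis by (simp add: diff_divide_distrib)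
  qed
qed

lemma eigJ_of: "h \<in> star_eigenspace n (real n - 2) \<Longrightarrow> eigJ n h"
  unfolding eigJ_def star_eigenspace_def by (auto simp: nbr_sum)

lemma eigJ_lin:
  assumes f: "eigJ n f" and h: "\<forall>x\<in>I. eigJ n (h x)"
  shows "eigJ n (\<lambda>\<pi>. f \<pi> - (\<Sum>x\<in>I. c x * h x \<pi>))"
  unfolding eigJ_def
proof
  fix \<pi> assume \<pi>: "\<pi> \<in> Sym n"
  have "(\<Sum>j\<in>{2..n}. f (\<pi> \<circ> transpose 1 j) - (\<Sum>x\<in>I. c x * h x (\<pi> \<circ> transpose 1 j)))
      = (\<Sum>j\<in>{2..n}. f (\<pi> \<circ> transpose 1 j)) - (\<Sum>x\<in>I. c x * (\<Sum>j\<in>{2..n}. h x (\<pi> \<circ> transpose 1 j)))"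
    by (simp add: sum_subtractf sum_distrib_left sum.swap[of _ "{2..n}"])
  also have "\<dots> = (real n - 2) * f \<pi> - (\<Sum>x\<in>I. c x * ((real n - 2) * h x \<pi>))"
    using f h \<pi> unfolding eigJ_def by (intro arg_cong2[where f="(-)"] sum.cong refl) auto
  also have "\<dots> = (real n - 2) * (f \<pi> - (\<Sum>x\<in>I. c x * h x \<pi>))"
    by (simp add: algebra_simps sum_distrib_left)
  finally show "(real n - 2) * (f \<pi> - (\<Sum>x\<in>I. c x * h x \<pi>)) =
      (\<Sum>j\<in>{2..n}. f (\<pi> \<circ> transpose 1 j) - (\<Sum>x\<in>I. c x * h x (\<pi> \<circ> transpose 1 j)))" by simp
qed

lemma marg_diff: "marg n (\<lambda>\<pi>. f \<pi> - h \<pi>) p a = marg n f p a - marg n h p a"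
  unfolding marg_def by (simp add: algebra_simps sum_subtractf)

lemma part3:
  assumes n: "n \<ge> 3" and f: "f \<in> star_eigenspace n (real n - 2)"
  shows "\<exists>c :: nat \<times> nat \<Rightarrow> real. \<forall>p\<in>Sym n. f p = (\<Sum>(i,k)\<in>{2..n} \<times> {3..n}. c (i,k) * fstar i 2 k p)"
proof -
  define B where "B = K n 1 1 2 2"
  have B: "B > 0" unfolding B_def using n by (intro B_pos) auto
  define M where "M = marg n f"
  define c :: "nat \<times> nat \<Rightarrow> real" where "c = (\<lambda>(i,k). (M k 1 - M k i) / (real n * B))"
  define I where "I = {2..n} \<times> {3..n}"
  define g where "g = (\<lambda>\<pi>. f \<pi> - (\<Sum>(i,k)\<in>I. c (i,k) * fstar i 2 k \<pi>))"
  have eigf: "eigJ n f" using f by (rule eigJ_of)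
  have g_alt: "g = (\<lambda>\<pi>. f \<pi> - (\<Sum>x\<in>I. c x * fstar (fst x) 2 (snd x) \<pi>))"
    unfolding g_def by (simp add: case_prod_unfold)
  have eigg: "eigJ n g" unfolding g_alt
    by (rule eigJ_lin[OF eigf]) (auto simp: I_def intro!: eigJ_of part1)
  have M1: "M 1 a = 0" for a unfolding M_def using marg_posk[OF eigf, of 2] n by auto
  have Msum: "(\<Sum>j\<in>{2..n}. M j a) = 0" for a
    using marg_pos1[OF eigf, of a] M1[of a] unfolding M_def by simp
  have Mtot: "(\<Sum>a\<in>{1..n}. M k a) = 0" if "k \<in> {1..n}" for k
  proof -
    have "(\<Sum>a\<in>{1..n}. M k a) = (\<Sum>\<pi>\<in>Sym n. f \<pi>)" unfolding M_def using that by (rule marg_total)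
    also have "\<dots> = (\<Sum>a\<in>{1..n}. M 1 a)" unfolding M_def using n by (intro marg_total[symmetric]) auto
    also have "\<dots> = 0" using M1 by simp
    finally show ?thesis .
  qed
  have base: "\<forall>p\<in>{1..n}. \<forall>a. marg n g p a = 0"
  proof (intro ballI allI)
    fix p a assume p: "p \<in> {1..n}"
    have mg: "marg n g p a = M p a - (\<Sum>(i,k)\<in>I. c (i,k) * marg n (fstar i 2 k) p a)"
      unfolding g_def M_def by (simp add: marg_diff marg_lin)
    show "marg n g p a = 0"
    proof (cases "a \<in> {1..n}")
      case False
      have "M p a = 0" unfolding M_def using p False by (rule marg_out)
      moreover have "(\<Sum>(i,k)\<in>I. c (i,k) * marg n (fstar i 2 k) p a) = 0"
        using n p False by (intro sum.neutral) (auto simp: I_def marg_fstar_form)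
      ultimately show ?thesis using mg by simp
    next
      case True
      have D: "Dc n c k a = - M k a / B" if k: "k \<in> {3..n}" for k
        by (rule D_calc[OF _ Mtot]) (use k n B True in \<open>auto simp: c_def\<close>)
      have "(\<Sum>(i,k)\<in>I. c (i,k) * marg n (fstar i 2 k) p a) = B * (\<Sum>k\<in>{3..n}. (ind (p = 2) - ind (p = k)) * Dc n c k a)"
        unfolding I_def B_def using n p True by (rule lincomb_marg)
      also have "\<dots> = - (\<Sum>k\<in>{3..n}. (ind (p = 2) - ind (p = k)) * M k a)"
        using B D by (simp add: sum_distrib_left sum_negf[symmetric])
      also have "(\<Sum>k\<in>{3..n}. (ind (p = 2) - ind (p = k)) * M k a) = - M p a"
      proof -
        consider "p = 1" | "p = 2" | "p \<in> {3..n}" using p by fastforce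
        then show ?thesis
        proof cases
          case 1
          have "(\<Sum>k\<in>{3..n}. (ind (p = 2) - ind (p = k)) * M k a) = 0"
            using 1 by (intro sum.neutral) (auto simp: ind_def)
          then show ?thesis using 1 M1 by simp
        next
          case 2
          have "(\<Sum>k\<in>{3..n}. (ind (p = 2) - ind (p = k)) * M k a) = (\<Sum>k\<in>{3..n}. M k a)"
            using 2 by (intro sum.cong refl) (auto simp: ind_def)
          also have "\<dots> = - M 2 a" using Msum[of a] sum_split2[of n "\<lambda>j. M j a"] n by simp
          finally show ?thesis using 2 by simp
        next
          case 3
          have "(\<Sum>k\<in>{3..n}. (ind (p = 2) - ind (p = k)) * M k a) = (\<Sum>k\<in>{3..n}. - (if p = k then M k a else 0))"
            using 3 by (intro sum.cong refl) (auto simp: ind_def)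
          also have "\<dots> = - M p a" using 3 by (simp add: sum_negf)
          finally show ?thesis .
        qed
      qed
      finally show ?thesis using mg by simp
    qed
  qed
  show ?thesis
  proof (intro exI ballI)
    fix p assume "p \<in> Sym n"
    then have "g p = 0" using g_zero[OF eigg n base] by blast
    then show "f p = (\<Sum>(i,k)\<in>{2..n} \<times> {3..n}. c (i,k) * fstar i 2 k p)" unfolding g_def I_def by simp
  qed
qed

theorem lemma15:
  fixes n :: nat
  assumes "n \<ge> 3"
  defines "I \<equiv> {2..n} \<times> {3..n}"
  shows "(\<forall>(i,k)\<in>I. fstar i 2 k \<in> star_eigenspace n (real n - 2))
   \<and> (\<forall>c :: nat \<times> nat \<Rightarrow> real.
         (\<forall>p\<in>Sym n. (\<Sum>(i,k)\<in>I. c (i,k) * fstar i 2 k p) = 0) \<longrightarrow> (\<forall>ik\<in>I. c ik = 0))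
   \<and> (\<forall>f\<in>star_eigenspace n (real n - 2). \<exists>c :: nat \<times> nat \<Rightarrow> real.
         \<forall>p\<in>Sym n. f p = (\<Sum>(i,k)\<in>I. c (i,k) * fstar i 2 k p))"
  using assms part1 part2 part3 unfolding I_def by auto

end
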